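(* Let $k$ be a kernel on $\mathcal{X}$, $\sigma>0$, $f\in\mathcal{H}_k$, $g\in\mathcal{H}_{\sigma^2\delta}$, $h=f+g$. Let $x_1,\dots,x_t\in\mathcal{X}$ be pairwise distinct with observations $y_i=h(x_i)$, and let $\widehat x_1,\dots,\widehat x_L\in\mathcal{X}\setminus\{x_1,\dots,x_t\}$. Then $$\Big|\sum_{i=1}^L\widehat m_t(\widehat x_i)-\sum_{i=1}^L f(\widehat x_i)\Big|\le\|h\|_{\mathcal{H}_{k^\sigma}}\sqrt{\mathbf 1^T\mathbf{A}\mathbf 1+L^2\sigma^2}+L\|g\|_{\mathcal{H}_{\sigma^2\delta}}\sigma,$$ where $\mathbf{A}_{ij}=k(\widehat x_i,\widehat x_j)-\mathbf{k}_t(\widehat x_i)^T(\mathbf{K}_t+\sigma^2I)^{-1}\mathbf{k}_t(\widehat x_j)$.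
   Context: $\delta(x,y)=1$ if $x=y$, else $0$; $k^\sigma=k+\sigma^2\delta$; $\mathcal{H}_{\sigma^2\delta}$ is the RKHS of $\sigma^2\delta$. $\mathbf{k}_t(x)=[k(x,x_i)]_{i\le t}$, $\mathbf{K}_t=[k(x_i,x_j)]_{i,j\le t}$, $\mathbf{y}_t=[y_i]_{i\le t}$, $\widehat m_t(x)=\mathbf{k}_t(x)^T(\mathbf{K}_t+\sigma^2I)^{-1}\mathbf{y}_t$; $\mathbf 1$ is the all-ones vector. *)

theory Defs
  imports Complex_Main "Jordan_Normal_Form.Gauss_Jordan_Elimination"
begin

definition pd_kernel :: "('a \<Rightarrow> 'a \<Rightarrow> real) \<Rightarrow> bool" where
  "pd_kernel k \<longleftrightarrow> (\<forall>x y. k x y = k y x) \<and>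
     (\<forall>(xs :: 'a list) (c :: nat \<Rightarrow> real).
        0 \<le> (\<Sum>i<length xs. \<Sum>j<length xs. c i * c j * k (xs ! i) (xs ! j)))"

definition is_rkhs :: "('a \<Rightarrow> 'a \<Rightarrow> real) \<Rightarrow> ('a \<Rightarrow> real) set
      \<Rightarrow> (('a \<Rightarrow> real) \<Rightarrow> ('a \<Rightarrow> real) \<Rightarrow> real) \<Rightarrow> bool" where
  "is_rkhs k H ip \<longleftrightarrow>
     (\<lambda>x. 0) \<in> H \<and>
     (\<forall>f\<in>H. \<forall>g\<in>H. (\<lambda>x. f x + g x) \<in> H) \<and>
     (\<forall>f\<in>H. \<forall>a. (\<lambda>x. a * f x) \<in> H) \<and>
     (\<forall>f\<in>H. \<forall>g\<in>H. ip f g = ip g f) \<and>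
     (\<forall>f\<in>H. \<forall>g\<in>H. \<forall>h\<in>H. ip (\<lambda>x. f x + g x) h = ip f h + ip g h) \<and>
     (\<forall>f\<in>H. \<forall>g\<in>H. \<forall>a. ip (\<lambda>x. a * f x) g = a * ip f g) \<and>
     (\<forall>f\<in>H. 0 \<le> ip f f \<and> (ip f f = 0 \<longrightarrow> f = (\<lambda>x. 0))) \<and>
     (\<forall>F :: nat \<Rightarrow> 'a \<Rightarrow> real.
        (\<forall>n. F n \<in> H) \<and>
        (\<forall>e>0. \<exists>N. \<forall>m\<ge>N. \<forall>n\<ge>N.
            ip (\<lambda>x. F m x - F n x) (\<lambda>x. F m x - F n x) < e)
        \<longrightarrow> (\<exists>f\<in>H. \<forall>e>0. \<exists>N. \<forall>n\<ge>N.
            ip (\<lambda>x. F n x - f x) (\<lambda>x. F n x - f x) < e)) \<and>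
     (\<forall>x. k x \<in> H) \<and>
     (\<forall>f\<in>H. \<forall>x. ip f (k x) = f x)"

definition rkhs_norm :: "(('a \<Rightarrow> real) \<Rightarrow> ('a \<Rightarrow> real) \<Rightarrow> real) \<Rightarrow> ('a \<Rightarrow> real) \<Rightarrow> real" where
  "rkhs_norm ip h = sqrt (ip h h)"

definition delta_kernel :: "'a \<Rightarrow> 'a \<Rightarrow> real" where
  "delta_kernel x y = (if x = y then 1 else 0)"

definition noisy_kernel :: "('a \<Rightarrow> 'a \<Rightarrow> real) \<Rightarrow> real \<Rightarrow> 'a \<Rightarrow> 'a \<Rightarrow> real" where
  "noisy_kernel k \<sigma> x y = k x y + \<sigma>^2 * delta_kernel x y"

definition kvec :: "('a \<Rightarrow> 'a \<Rightarrow> real) \<Rightarrow> 'a list \<Rightarrow> 'a \<Rightarrow> real vec" where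
  "kvec k xs x = vec (length xs) (\<lambda>i. k x (xs ! i))"

definition Kmat :: "('a \<Rightarrow> 'a \<Rightarrow> real) \<Rightarrow> 'a list \<Rightarrow> real mat" where
  "Kmat k xs = mat (length xs) (length xs) (\<lambda>(i, j). k (xs ! i) (xs ! j))"

definition regInv :: "('a \<Rightarrow> 'a \<Rightarrow> real) \<Rightarrow> real \<Rightarrow> 'a list \<Rightarrow> real mat" where
  "regInv k \<sigma> xs = the (mat_inverse (Kmat k xs + \<sigma>^2 \<cdot>\<^sub>m 1\<^sub>m (length xs)))"

definition post_mean :: "('a \<Rightarrow> 'a \<Rightarrow> real) \<Rightarrow> real \<Rightarrow> 'a list \<Rightarrow> real vec \<Rightarrow> 'a \<Rightarrow> real" where
  "post_mean k \<sigma> xs ys x = kvec k xs x \<bullet> (regInv k \<sigma> xs *\<^sub>v ys)"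

definition post_cov :: "('a \<Rightarrow> 'a \<Rightarrow> real) \<Rightarrow> real \<Rightarrow> 'a list \<Rightarrow> 'a \<Rightarrow> 'a \<Rightarrow> real" where
  "post_cov k \<sigma> xs x x' = k x x' - kvec k xs x \<bullet> (regInv k \<sigma> xs *\<^sub>v kvec k xs x')"

end

theory Submission
  imports Defs "Jordan_Normal_Form.Determinant"
begin


lemma regInv_props:
  fixes k :: "'a \<Rightarrow> 'a \<Rightarrow> real" and zs :: "'a list"
  assumes pd: "pd_kernel k" and s: "\<sigma> > 0"
  defines "G \<equiv> Kmat k zs + \<sigma>^2 \<cdot>\<^sub>m 1\<^sub>m (length zs)"
  shows "regInv k \<sigma> zs \<in> carrier_mat (length zs) (length zs)"
    "regInv k \<sigma> zs * G = 1\<^sub>m (length zs)" "G * regInv k \<sigma> zs = 1\<^sub>m (length zs)"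
    "transpose_mat (regInv k \<sigma> zs) = regInv k \<sigma> zs"
proof -
  let ?n = "length zs"
  have Gc: "G \<in> carrier_mat ?n ?n" unfolding G_def Kmat_def by auto
  have Gij: "G $$ (i,j) = k (zs!i) (zs!j) + \<sigma>^2 * (if i = j then 1 else 0)" if "i < ?n" "j < ?n" for i j
    using that unfolding G_def Kmat_def by auto
  have det: "det G \<noteq> 0"
  proof
    assume "det G = 0"
    then obtain v where v: "v \<in> carrier_vec ?n" "v \<noteq> 0\<^sub>v ?n" "G *\<^sub>v v = 0\<^sub>v ?n"
      using det_0_iff_vec_prod_zero_field[OF Gc] by auto
    have "0 = (\<Sum>i<?n. v$i * (G *\<^sub>v v)$i)" using v by simp
    also have "\<dots> = (\<Sum>i<?n. v$i * (\<Sum>j<?n. G$$(i,j) * v$j))"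
    proof (rule sum.cong[OF refl])
      fix i assume "i \<in> {..<?n}"
      then show "v$i * (G *\<^sub>v v)$i = v$i * (\<Sum>j<?n. G$$(i,j) * v$j)"
        using Gc v(1) unfolding mult_mat_vec_def scalar_prod_def
        by (simp add: lessThan_atLeast0 mult.commute)
    qed
    also have "\<dots> = (\<Sum>i<?n. \<Sum>j<?n. v$i * v$j * k (zs!i) (zs!j) + (if i = j then \<sigma>^2 * (v$i * v$i) else 0))"
    proof (rule sum.cong[OF refl])
      fix i assume i: "i \<in> {..<?n}"
      show "v$i * (\<Sum>j<?n. G$$(i,j) * v$j) = (\<Sum>j<?n. v$i * v$j * k (zs!i) (zs!j) + (if i = j then \<sigma>^2 * (v$i * v$i) else 0))"
        unfolding sum_distrib_left using i by (intro sum.cong refl) (auto simp: Gij algebra_simps)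
    qed
    also have "\<dots> = (\<Sum>i<?n. \<Sum>j<?n. v$i * v$j * k (zs!i) (zs!j)) + \<sigma>^2 * (\<Sum>i<?n. v$i * v$i)"
      by (simp add: sum.distrib sum_distrib_left)
    finally have eq: "0 = (\<Sum>i<?n. \<Sum>j<?n. v$i * v$j * k (zs!i) (zs!j)) + \<sigma>^2 * (\<Sum>i<?n. v$i * v$i)" .
    have "0 \<le> (\<Sum>i<?n. \<Sum>j<?n. v$i * v$j * k (zs!i) (zs!j))"
      using pd unfolding pd_kernel_def by blast
    moreover have "0 \<le> (\<Sum>i<?n. v$i * v$i)" by (intro sum_nonneg) auto
    ultimately have "(\<Sum>i<?n. v$i * v$i) = 0" using eq s
      by (smt (verit, best) mult_pos_pos zero_less_power)
    hence "\<forall>i\<in>{..<?n}. v$i * v$i = 0" by (subst (asm) sum_nonneg_eq_0_iff) auto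
    hence "v = 0\<^sub>v ?n" using v by (intro eq_vecI) auto
    with v show False by simp
  qed
  obtain B where B: "mat_inverse G = Some B"
  proof (cases "mat_inverse G")
    case None
    from mat_inverse(1)[OF Gc None, of "()"] det_non_zero_imp_unit[OF Gc det, of "()"]
    show ?thesis by simp
  qed auto
  have R: "regInv k \<sigma> zs = B" unfolding regInv_def G_def[symmetric] B by simp
  from mat_inverse(2)[OF Gc B] have BG: "G * B = 1\<^sub>m ?n" "B * G = 1\<^sub>m ?n" "B \<in> carrier_mat ?n ?n"
    by auto
  show "regInv k \<sigma> zs \<in> carrier_mat ?n ?n" "regInv k \<sigma> zs * G = 1\<^sub>m ?n" "G * regInv k \<sigma> zs = 1\<^sub>m ?n"
    using BG R by auto
  have Gt: "transpose_mat G = G"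
    using Gc pd unfolding pd_kernel_def by (intro eq_matI) (auto simp: Gij)
  have "transpose_mat B = transpose_mat B * (G * B)" using BG by simp
  also have "\<dots> = (transpose_mat B * G) * B" using BG Gc by (simp add: assoc_mult_mat[symmetric])
  also have "transpose_mat B * G = transpose_mat (G * B)"
    using BG Gc Gt by (metis transpose_mult)
  also have "\<dots> = 1\<^sub>m ?n" using BG by simp
  finally show "transpose_mat (regInv k \<sigma> zs) = regInv k \<sigma> zs" using R BG by simp
qed




lemma regInv_entries:
  fixes k :: "'a \<Rightarrow> 'a \<Rightarrow> real" and zs :: "'a list"
  assumes pd: "pd_kernel k" and s: "\<sigma> > 0" and i: "i < length zs" and j: "j < length zs"
  shows "regInv k \<sigma> zs $$ (i,j) = regInv k \<sigma> zs $$ (j,i)"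
    "(\<Sum>l<length zs. regInv k \<sigma> zs $$ (i,l) * (k (zs!l) (zs!j) + \<sigma>^2 * (if l = j then 1 else 0)))
       = (if i = j then 1 else 0)"
proof -
  note P = regInv_props[OF pd s, of zs]
  have "regInv k \<sigma> zs $$ (j,i) = (transpose_mat (regInv k \<sigma> zs)) $$ (i,j)" using P(1) i j by simp
  then show "regInv k \<sigma> zs $$ (i,j) = regInv k \<sigma> zs $$ (j,i)" using P(4) by simp
  have "(regInv k \<sigma> zs * (Kmat k zs + \<sigma>^2 \<cdot>\<^sub>m 1\<^sub>m (length zs))) $$ (i,j) = (if i = j then 1 else 0)"
    using P(2) i j by simp
  moreover have "(regInv k \<sigma> zs * (Kmat k zs + \<sigma>^2 \<cdot>\<^sub>m 1\<^sub>m (length zs))) $$ (i,j)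
     = (\<Sum>l<length zs. regInv k \<sigma> zs $$ (i,l) * (k (zs!l) (zs!j) + \<sigma>^2 * (if l = j then 1 else 0)))"
    using P(1) i j by (auto simp: scalar_prod_def Kmat_def lessThan_atLeast0 intro!: sum.cong)
  ultimately show "(\<Sum>l<length zs. regInv k \<sigma> zs $$ (i,l) * (k (zs!l) (zs!j) + \<sigma>^2 * (if l = j then 1 else 0)))
       = (if i = j then 1 else 0)" by simp
qed

lemma post_mean_sum:
  assumes pd: "pd_kernel k" and s: "\<sigma> > 0" and "dim_vec ys = length xs"
  shows "post_mean k \<sigma> xs ys x = (\<Sum>i<length xs. k x (xs!i) * (\<Sum>j<length xs. regInv k \<sigma> xs $$ (i,j) * ys$j))"
  using regInv_props(1)[OF pd s, of xs] assms(3)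
  by (auto simp: post_mean_def kvec_def scalar_prod_def mult_mat_vec_def lessThan_atLeast0 intro!: sum.cong)

lemma post_cov_sum:
  assumes pd: "pd_kernel k" and s: "\<sigma> > 0"
  shows "post_cov k \<sigma> xs x x' = k x x' - (\<Sum>i<length xs. k x (xs!i) * (\<Sum>j<length xs. regInv k \<sigma> xs $$ (i,j) * k x' (xs!j)))"
  using regInv_props(1)[OF pd s, of xs]
  by (auto simp: post_cov_def kvec_def scalar_prod_def mult_mat_vec_def lessThan_atLeast0 intro!: sum.cong)

context
  fixes K :: "'a \<Rightarrow> 'a \<Rightarrow> real" and H :: "('a \<Rightarrow> real) set" and ip
  assumes rk: "is_rkhs K H ip"
begin

lemma rk_zero: "(\<lambda>x. 0) \<in> H" using rk unfolding is_rkhs_def by blast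
lemma rk_add: "f \<in> H \<Longrightarrow> g \<in> H \<Longrightarrow> (\<lambda>x. f x + g x) \<in> H" using rk unfolding is_rkhs_def by blast
lemma rk_scale: "f \<in> H \<Longrightarrow> (\<lambda>x. a * f x) \<in> H" using rk unfolding is_rkhs_def by blast
lemma rk_sym: "f \<in> H \<Longrightarrow> g \<in> H \<Longrightarrow> ip f g = ip g f" using rk unfolding is_rkhs_def by blast
lemma rk_addl: "f \<in> H \<Longrightarrow> g \<in> H \<Longrightarrow> h \<in> H \<Longrightarrow> ip (\<lambda>x. f x + g x) h = ip f h + ip g h"
  using rk unfolding is_rkhs_def by blast
lemma rk_scalel: "f \<in> H \<Longrightarrow> g \<in> H \<Longrightarrow> ip (\<lambda>x. a * f x) g = a * ip f g"
  using rk unfolding is_rkhs_def by blast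
lemma rk_pos: "f \<in> H \<Longrightarrow> 0 \<le> ip f f" using rk unfolding is_rkhs_def by blast
lemma rk_ker: "K x \<in> H" using rk unfolding is_rkhs_def by blast
lemma rk_repr: "f \<in> H \<Longrightarrow> ip f (K x) = f x" using rk unfolding is_rkhs_def by blast
lemma rk_complete: "(\<forall>n. (F :: nat \<Rightarrow> 'a \<Rightarrow> real) n \<in> H) \<Longrightarrow> (\<forall>e>0. \<exists>N. \<forall>m\<ge>N. \<forall>n\<ge>N.
            ip (\<lambda>x. F m x - F n x) (\<lambda>x. F m x - F n x) < e)
        \<Longrightarrow> (\<exists>f\<in>H. \<forall>e>0. \<exists>N. \<forall>n\<ge>N.
            ip (\<lambda>x. F n x - f x) (\<lambda>x. F n x - f x) < e)"
proof -
  assume a: "\<forall>n. F n \<in> H" "\<forall>e>0. \<exists>N. \<forall>m\<ge>N. \<forall>n\<ge>N.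
            ip (\<lambda>x. F m x - F n x) (\<lambda>x. F m x - F n x) < e"
  from rk have "\<forall>F :: nat \<Rightarrow> 'a \<Rightarrow> real. (\<forall>n. F n \<in> H) \<and> (\<forall>e>0. \<exists>N. \<forall>m\<ge>N. \<forall>n\<ge>N.
            ip (\<lambda>x. F m x - F n x) (\<lambda>x. F m x - F n x) < e)
        \<longrightarrow> (\<exists>f\<in>H. \<forall>e>0. \<exists>N. \<forall>n\<ge>N.
            ip (\<lambda>x. F n x - f x) (\<lambda>x. F n x - f x) < e)" unfolding is_rkhs_def by (elim conjE)
  then show ?thesis using a by blast
qed

lemma rk_minus: "f \<in> H \<Longrightarrow> g \<in> H \<Longrightarrow> (\<lambda>x. f x - g x) \<in> H"
  using rk_add[of f "\<lambda>x. (-1) * g x"] rk_scale[of g "-1"] by simp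

lemma rk_sum: "finite A \<Longrightarrow> (\<And>i. i \<in> A \<Longrightarrow> F i \<in> H) \<Longrightarrow> (\<lambda>x. \<Sum>i\<in>A. F i x) \<in> H"
proof (induction A rule: finite_induct)
  case empty then show ?case using rk_zero by simp
next
  case (insert a A) then show ?case using rk_add[of "F a" "\<lambda>x. \<Sum>i\<in>A. F i x"] by simp
qed

lemma rk_lin: "finite A \<Longrightarrow> (\<And>i. i \<in> A \<Longrightarrow> F i \<in> H) \<Longrightarrow> (\<lambda>x. \<Sum>i\<in>A. a i * F i x) \<in> H"
  using rk_sum[of A "\<lambda>i x. a i * F i x"] rk_scale by blast

lemma rk_ip_zero: "g \<in> H \<Longrightarrow> ip (\<lambda>x. 0) g = 0"
  using rk_scalel[of "\<lambda>x. 0" g 0] rk_zero by simp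

lemma rk_minusl: "f \<in> H \<Longrightarrow> g \<in> H \<Longrightarrow> h \<in> H \<Longrightarrow> ip (\<lambda>x. f x - g x) h = ip f h - ip g h"
  using rk_addl[of f "\<lambda>x. (-1) * g x" h] rk_scale[of g "-1"] rk_scalel[of g h "-1"] by simp

lemma rk_ip_lin: "finite A \<Longrightarrow> (\<And>i. i \<in> A \<Longrightarrow> F i \<in> H) \<Longrightarrow> u \<in> H \<Longrightarrow>
   ip (\<lambda>x. \<Sum>i\<in>A. a i * F i x) u = (\<Sum>i\<in>A. a i * ip (F i) u)"
proof (induction A rule: finite_induct)
  case empty then show ?case using rk_ip_zero by simp
next
  case (insert b A)
  have "ip (\<lambda>x. \<Sum>i\<in>insert b A. a i * F i x) u = ip (\<lambda>x. a b * F b x + (\<Sum>i\<in>A. a i * F i x)) u"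
    using insert by simp
  also have "\<dots> = ip (\<lambda>x. a b * F b x) u + ip (\<lambda>x. \<Sum>i\<in>A. a i * F i x) u"
    using insert by (intro rk_addl rk_scale rk_lin) auto
  also have "\<dots> = a b * ip (F b) u + (\<Sum>i\<in>A. a i * ip (F i) u)"
    using insert by (simp add: rk_scalel)
  finally show ?case using insert by simp
qed

lemma rk_ip_kern_r: "finite A \<Longrightarrow> u \<in> H \<Longrightarrow>
   ip u (\<lambda>x. \<Sum>i\<in>A. a i * K (z i) x) = (\<Sum>i\<in>A. a i * u (z i))"
proof -
  assume A: "finite A" and u: "u \<in> H"
  have "ip u (\<lambda>x. \<Sum>i\<in>A. a i * K (z i) x) = ip (\<lambda>x. \<Sum>i\<in>A. a i * K (z i) x) u"
    using A u by (intro rk_sym rk_lin rk_ker) auto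
  also have "\<dots> = (\<Sum>i\<in>A. a i * ip (K (z i)) u)"
    using A u by (intro rk_ip_lin rk_ker) auto
  also have "\<dots> = (\<Sum>i\<in>A. a i * u (z i))"
    using u by (intro sum.cong refl) (simp add: rk_sym[OF rk_ker u] rk_repr[OF u])
  finally show ?thesis .
qed

lemma rk_norm_diff: "f \<in> H \<Longrightarrow> g \<in> H \<Longrightarrow>
  ip (\<lambda>x. f x - g x) (\<lambda>x. f x - g x) = ip f f - 2 * ip f g + ip g g"
proof -
  assume f: "f \<in> H" and g: "g \<in> H"
  have d: "(\<lambda>x. f x - g x) \<in> H" using f g by (rule rk_minus)
  have "ip (\<lambda>x. f x - g x) (\<lambda>x. f x - g x) = ip f (\<lambda>x. f x - g x) - ip g (\<lambda>x. f x - g x)"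
    using f g d by (rule rk_minusl)
  also have "ip f (\<lambda>x. f x - g x) = ip f f - ip g f"
    using f g d rk_sym[OF f d] rk_minusl[OF f g f] by simp
  also have "ip g (\<lambda>x. f x - g x) = ip f g - ip g g"
    using f g d rk_sym[OF g d] rk_minusl[OF f g g] by simp
  finally show ?thesis using rk_sym[OF f g] by simp
qed

lemma quad_disc:
  fixes a b c :: real
  assumes "\<And>t. 0 \<le> a - 2 * t * b + t^2 * c" and c0: "c \<ge> 0"
  shows "b^2 \<le> a * c"
proof (cases "c = 0")
  case True
  have "b = 0"
  proof (rule ccontr)
    assume "b \<noteq> 0"
    with assms(1)[of "(a + 1) / (2 * b)"] True show False by (simp add: field_simps)
  qed
  with True show ?thesis using assms(1)[of 0] by simp
next
  case False
  have c: "c > 0" using c0 False by simp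
  have "0 \<le> a - 2 * (b/c) * b + (b/c)^2 * c" by (rule assms(1))
  also have "\<dots> = (a * c - b^2) / c" using c by (simp add: field_simps power2_eq_square)
  finally show ?thesis using c by (simp add: divide_nonneg_pos zero_le_divide_iff)
qed

lemma rk_cs: "f \<in> H \<Longrightarrow> g \<in> H \<Longrightarrow> \<bar>ip f g\<bar> \<le> sqrt (ip f f) * sqrt (ip g g)"
proof -
  assume f: "f \<in> H" and g: "g \<in> H"
  have "(ip f g)^2 \<le> ip f f * ip g g"
  proof (rule quad_disc)
    fix t
    have tg: "(\<lambda>x. t * g x) \<in> H" using g by (rule rk_scale)
    have "0 \<le> ip (\<lambda>x. f x - t * g x) (\<lambda>x. f x - t * g x)" using f tg by (intro rk_pos rk_minus)
    also have "\<dots> = ip f f - 2 * ip f (\<lambda>x. t * g x) + ip (\<lambda>x. t * g x) (\<lambda>x. t * g x)"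
      using f tg by (rule rk_norm_diff)
    also have "ip f (\<lambda>x. t * g x) = t * ip f g"
      using f g tg by (simp add: rk_sym[OF f tg] rk_scalel rk_sym[OF f g])
    also have "ip (\<lambda>x. t * g x) (\<lambda>x. t * g x) = t^2 * ip g g"
      using g tg by (simp add: rk_scalel rk_sym[OF g tg] power2_eq_square)
    finally show "0 \<le> ip f f - 2 * t * ip f g + t^2 * ip g g" by simp
  qed (rule rk_pos[OF g])
  hence "sqrt ((ip f g)^2) \<le> sqrt (ip f f * ip g g)" by (rule real_sqrt_le_mono)
  then show ?thesis using rk_pos[OF f] rk_pos[OF g] by (simp add: real_sqrt_mult)
qed

lemma rk_eval_bound: "f \<in> H \<Longrightarrow> \<bar>f z\<bar> \<le> sqrt (ip f f) * sqrt (K z z)"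
  using rk_cs[OF _ rk_ker, of f z] rk_repr[OF _ , of f z] rk_repr[OF rk_ker, of z z] by simp

end




definition coef :: "('a \<Rightarrow> 'a \<Rightarrow> real) \<Rightarrow> real \<Rightarrow> ('a \<Rightarrow> real) \<Rightarrow> 'a list \<Rightarrow> nat \<Rightarrow> real" where
  "coef k \<sigma> h zs i = (\<Sum>j<length zs. regInv k \<sigma> zs $$ (i,j) * h (zs!j))"

definition interp :: "('a \<Rightarrow> 'a \<Rightarrow> real) \<Rightarrow> real \<Rightarrow> ('a \<Rightarrow> real) \<Rightarrow> 'a list \<Rightarrow> 'a \<Rightarrow> real" where
  "interp k \<sigma> h zs = (\<lambda>x. \<Sum>i<length zs. coef k \<sigma> h zs i * noisy_kernel k \<sigma> (zs!i) x)"

definition Nv :: "('a \<Rightarrow> 'a \<Rightarrow> real) \<Rightarrow> real \<Rightarrow> ('a \<Rightarrow> real) \<Rightarrow> 'a list \<Rightarrow> real" where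
  "Nv k \<sigma> h zs = (\<Sum>i<length zs. coef k \<sigma> h zs i * h (zs!i))"

lemma noisy_distinct:
  assumes "distinct zs" "i < length zs" "j < length zs"
  shows "noisy_kernel k \<sigma> (zs!i) (zs!j) = k (zs!i) (zs!j) + \<sigma>^2 * (if i = j then 1 else 0)"
  using assms by (simp add: noisy_kernel_def delta_kernel_def nth_eq_iff_index_eq)

lemma interp_val:
  assumes pd: "pd_kernel k" and s: "\<sigma> > 0" and d: "distinct zs" and j: "j < length zs"
  shows "interp k \<sigma> h zs (zs!j) = h (zs!j)"
proof -
  let ?n = "length zs" and ?R = "regInv k \<sigma> zs"
  have "interp k \<sigma> h zs (zs!j) = (\<Sum>i<?n. (\<Sum>l<?n. ?R $$ (i,l) * h (zs!l)) * (k (zs!i) (zs!j) + \<sigma>^2 * (if i = j then 1 else 0)))"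
    unfolding interp_def coef_def using d j by (intro sum.cong refl) (simp add: noisy_distinct)
  also have "\<dots> = (\<Sum>l<?n. h (zs!l) * (\<Sum>i<?n. ?R $$ (l,i) * (k (zs!i) (zs!j) + \<sigma>^2 * (if i = j then 1 else 0))))"
    unfolding sum_distrib_right sum_distrib_left
    by (subst sum.swap) (intro sum.cong refl, simp add: regInv_entries(1)[OF pd s] j)
  also have "\<dots> = (\<Sum>l<?n. h (zs!l) * (if l = j then 1 else 0))"
    using j by (intro sum.cong refl) (simp add: regInv_entries(2)[OF pd s])
  also have "\<dots> = h (zs!j)" using j by (simp add: if_distrib cong: if_cong)
  finally show ?thesis .
qed


context
  fixes k :: "'a \<Rightarrow> 'a \<Rightarrow> real" and \<sigma> :: real and Hs and ips and h :: "'a \<Rightarrow> real"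
  assumes pd: "pd_kernel k" and s: "\<sigma> > 0" and rks: "is_rkhs (noisy_kernel k \<sigma>) Hs ips"
begin

lemma interp_in: "interp k \<sigma> h zs \<in> Hs"
  unfolding interp_def by (intro rk_lin[OF rks] rk_ker[OF rks]) auto

lemma ip_interp: "u \<in> Hs \<Longrightarrow> ips u (interp k \<sigma> h zs) = (\<Sum>i<length zs. coef k \<sigma> h zs i * u (zs!i))"
  unfolding interp_def by (rule rk_ip_kern_r[OF rks]) auto

lemma proj: "distinct zs \<Longrightarrow> u \<in> Hs \<Longrightarrow> (\<And>j. j < length zs \<Longrightarrow> u (zs!j) = h (zs!j)) \<Longrightarrow>
   ips u (interp k \<sigma> h zs) = Nv k \<sigma> h zs"
  by (simp add: ip_interp Nv_def)

lemma N_self: "distinct zs \<Longrightarrow> ips (interp k \<sigma> h zs) (interp k \<sigma> h zs) = Nv k \<sigma> h zs"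
  by (rule proj) (auto simp: interp_in interp_val[OF pd s])

lemma Nv_nonneg: "distinct zs \<Longrightarrow> 0 \<le> Nv k \<sigma> h zs"
  using N_self rk_pos[OF rks interp_in] by metis

lemma Nv_diff:
  assumes d: "distinct zs" "distinct zs'" and sub: "set zs \<subseteq> set zs'"
  shows "ips (\<lambda>x. interp k \<sigma> h zs' x - interp k \<sigma> h zs x) (\<lambda>x. interp k \<sigma> h zs' x - interp k \<sigma> h zs x)
           = Nv k \<sigma> h zs' - Nv k \<sigma> h zs"
    "ips (\<lambda>x. interp k \<sigma> h zs x - interp k \<sigma> h zs' x) (\<lambda>x. interp k \<sigma> h zs x - interp k \<sigma> h zs' x)
           = Nv k \<sigma> h zs' - Nv k \<sigma> h zs"
proof -
  have c: "ips (interp k \<sigma> h zs') (interp k \<sigma> h zs) = Nv k \<sigma> h zs"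
  proof (rule proj[OF d(1) interp_in])
    fix j assume "j < length zs"
    then have "zs!j \<in> set zs'" using sub by auto
    then obtain j' where "j' < length zs'" "zs'!j' = zs!j" by (metis in_set_conv_nth)
    then show "interp k \<sigma> h zs' (zs!j) = h (zs!j)" using interp_val[OF pd s d(2)] by metis
  qed
  show "ips (\<lambda>x. interp k \<sigma> h zs' x - interp k \<sigma> h zs x) (\<lambda>x. interp k \<sigma> h zs' x - interp k \<sigma> h zs x)
           = Nv k \<sigma> h zs' - Nv k \<sigma> h zs"
    using rk_norm_diff[OF rks interp_in interp_in, of zs' zs] c N_self d by simp
  show "ips (\<lambda>x. interp k \<sigma> h zs x - interp k \<sigma> h zs' x) (\<lambda>x. interp k \<sigma> h zs x - interp k \<sigma> h zs' x)
           = Nv k \<sigma> h zs' - Nv k \<sigma> h zs"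
    using rk_norm_diff[OF rks interp_in interp_in, of zs zs'] c N_self d
      rk_sym[OF rks interp_in interp_in, of zs zs'] by simp
qed

lemma Nv_mono: "distinct zs \<Longrightarrow> distinct zs' \<Longrightarrow> set zs \<subseteq> set zs' \<Longrightarrow> Nv k \<sigma> h zs \<le> Nv k \<sigma> h zs'"
  using Nv_diff(1)[of zs zs'] rk_pos[OF rks rk_minus[OF rks interp_in interp_in, of zs' zs]] by simp

end


lemma cs2:
  fixes A B C D :: real
  shows "A*B + C*D \<le> sqrt (A^2+C^2) * sqrt (B^2+D^2)"
proof -
  have "(A*B + C*D)^2 \<le> (A^2+C^2) * (B^2+D^2)"
    using sum_squares_ge_zero[of "A*D - C*B" 0] by (simp add: power2_eq_square algebra_simps)
  hence "sqrt ((A*B + C*D)^2) \<le> sqrt ((A^2+C^2) * (B^2+D^2))" by (rule real_sqrt_le_mono)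
  then show ?thesis by (simp add: real_sqrt_mult)
qed

lemma Nv_bound:
  fixes k :: "'a \<Rightarrow> 'a \<Rightarrow> real"
  assumes pd: "pd_kernel k" and s: "\<sigma> > 0"
    and rkk: "is_rkhs k Hk ipk"
    and rkd: "is_rkhs (\<lambda>x y. \<sigma>^2 * delta_kernel x y) Hd ipd"
    and rks: "is_rkhs (noisy_kernel k \<sigma>) Hs ips"
    and f: "f \<in> Hk" and g: "g \<in> Hd" and d: "distinct zs"
  shows "Nv k \<sigma> (\<lambda>x. f x + g x) zs \<le> ipk f f + ipd g g"
proof -
  let ?h = "\<lambda>x. f x + g x" and ?n = "length zs"
  define a where "a = coef k \<sigma> ?h zs"
  define P where "P = (\<lambda>x. \<Sum>i<?n. a i * k (zs!i) x)"
  define Q where "Q = (\<lambda>x. \<Sum>i<?n. a i * (\<lambda>x y. \<sigma>^2 * delta_kernel x y) (zs!i) x)"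
  have P: "P \<in> Hk" unfolding P_def by (intro rk_lin[OF rkk] rk_ker[OF rkk]) auto
  have Q: "Q \<in> Hd" unfolding Q_def by (intro rk_lin[OF rkd] rk_ker[OF rkd]) auto
  have fP: "ipk f P = (\<Sum>i<?n. a i * f (zs!i))" unfolding P_def by (rule rk_ip_kern_r[OF rkk]) (auto simp: f)
  have gQ: "ipd g Q = (\<Sum>i<?n. a i * g (zs!i))" unfolding Q_def by (rule rk_ip_kern_r[OF rkd]) (auto simp: g)
  have PP: "ipk P P = (\<Sum>i<?n. a i * P (zs!i))" unfolding P_def[of] by (rule rk_ip_kern_r[OF rkk]) (auto simp: P[unfolded P_def])
  have QQ: "ipd Q Q = (\<Sum>i<?n. a i * Q (zs!i))" unfolding Q_def[of] by (rule rk_ip_kern_r[OF rkd]) (auto simp: Q[unfolded Q_def])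
  have PQ: "P x + Q x = interp k \<sigma> ?h zs x" for x
    unfolding P_def Q_def interp_def a_def noisy_kernel_def by (simp add: sum.distrib[symmetric] algebra_simps)
  have Nv: "Nv k \<sigma> ?h zs = ipk f P + ipd g Q"
    unfolding Nv_def fP gQ a_def by (simp add: sum.distrib[symmetric] algebra_simps)
  have Nv2: "Nv k \<sigma> ?h zs = ipk P P + ipd Q Q"
    unfolding PP QQ Nv_def a_def
    by (simp add: sum.distrib[symmetric] distrib_left[symmetric] PQ interp_val[OF pd s d])
  have "ipk f P \<le> sqrt (ipk f f) * sqrt (ipk P P)" using rk_cs[OF rkk f P] by simp
  moreover have "ipd g Q \<le> sqrt (ipd g g) * sqrt (ipd Q Q)" using rk_cs[OF rkd g Q] by simp
  ultimately have "Nv k \<sigma> ?h zs \<le> sqrt (ipk f f) * sqrt (ipk P P) + sqrt (ipd g g) * sqrt (ipd Q Q)"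
    using Nv by linarith
  also have "\<dots> \<le> sqrt ((sqrt (ipk f f))^2 + (sqrt (ipd g g))^2) * sqrt ((sqrt (ipk P P))^2 + (sqrt (ipd Q Q))^2)"
    by (rule cs2)
  also have "\<dots> = sqrt (ipk f f + ipd g g) * sqrt (Nv k \<sigma> ?h zs)"
    using rk_pos[OF rkk f] rk_pos[OF rkd g] rk_pos[OF rkk P] rk_pos[OF rkd Q] Nv2 by simp
  finally have le: "Nv k \<sigma> ?h zs \<le> sqrt (ipk f f + ipd g g) * sqrt (Nv k \<sigma> ?h zs)" .
  have N0: "0 \<le> Nv k \<sigma> ?h zs" using Nv2 rk_pos[OF rkk P] rk_pos[OF rkd Q] by simp
  show ?thesis
  proof (cases "Nv k \<sigma> ?h zs = 0")
    case True then show ?thesis using rk_pos[OF rkk f] rk_pos[OF rkd g] by simp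
  next
    case False
    then have pos: "sqrt (Nv k \<sigma> ?h zs) > 0" using N0 by simp
    have "sqrt (Nv k \<sigma> ?h zs) * sqrt (Nv k \<sigma> ?h zs) \<le> sqrt (ipk f f + ipd g g) * sqrt (Nv k \<sigma> ?h zs)"
      using le N0 by (simp add: real_sqrt_mult[symmetric])
    then have "sqrt (Nv k \<sigma> ?h zs) \<le> sqrt (ipk f f + ipd g g)" using pos by (rule mult_right_le_imp_le)
    then show ?thesis using N0 rk_pos[OF rkk f] rk_pos[OF rkd g] by simp
  qed
qed




lemma small_aux:
  fixes q e0 d c c1 :: real
  assumes "0 \<le> q" "q < (d/(2*c1))^2" "c1 > 0" "d > 0" "0 \<le> c" "c \<le> c1"
  shows "sqrt q * c < d/2"
proof -
  have "sqrt q < sqrt ((d/(2*c1))^2)" using assms by (intro real_sqrt_less_mono) auto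
  also have "\<dots> = d/(2*c1)" using assms by simp
  finally have sq: "sqrt q < d/(2*c1)" .
  have "sqrt q * c \<le> sqrt q * c1" using assms by (intro mult_left_mono) auto
  also have "\<dots> < d/(2*c1) * c1" using sq assms by (intro mult_strict_right_mono) auto
  also have "\<dots> = d/2" using assms by simp
  finally show ?thesis .
qed

lemma h_in:
  fixes k :: "'a \<Rightarrow> 'a \<Rightarrow> real"
  assumes pd: "pd_kernel k" and s: "\<sigma> > 0"
    and rkk: "is_rkhs k Hk ipk"
    and rkd: "is_rkhs (\<lambda>x y. \<sigma>^2 * delta_kernel x y) Hd ipd"
    and rks: "is_rkhs (noisy_kernel k \<sigma>) Hs ips"
    and f: "f \<in> Hk" and g: "g \<in> Hd"
  shows "(\<lambda>x. f x + g x) \<in> Hs"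
proof -
  define h where "h = (\<lambda>x. f x + g x)"
  define S where "S = {Nv k \<sigma> h zs | zs. distinct zs}"
  have bdd: "bdd_above S" unfolding S_def h_def
    using Nv_bound[OF pd s rkk rkd rks f g] by (intro bdd_aboveI) blast
  have ne: "S \<noteq> {}" unfolding S_def by auto
  define sp where "sp = Sup S"
  have le_s: "Nv k \<sigma> h zs \<le> sp" if "distinct zs" for zs
    unfolding sp_def using that bdd by (intro cSup_upper) (auto simp: S_def)
  have "\<exists>zs. distinct zs \<and> sp - inverse (real (Suc n)) < Nv k \<sigma> h zs" for n
  proof -
    have "sp - inverse (real (Suc n)) < Sup S" unfolding sp_def by simp
    then obtain x where "x \<in> S" "sp - inverse (real (Suc n)) < x"
      using less_cSup_iff[OF ne bdd] by blast
    then show ?thesis unfolding S_def by auto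
  qed
  then obtain zsf where zsf: "\<And>n. distinct (zsf n)" "\<And>n. sp - inverse (real (Suc n)) < Nv k \<sigma> h (zsf n)"
    by metis
  define Y where "Y n = remdups (concat (map zsf [0..<Suc n]))" for n
  have Yd: "distinct (Y n)" for n unfolding Y_def by simp
  have Yz: "set (zsf n) \<subseteq> set (Y n)" for n unfolding Y_def by auto
  have Yset: "set (Y n) = (\<Union>i\<in>{0..<Suc n}. set (zsf i))" for n
    unfolding Y_def set_remdups set_concat set_map set_upt by (simp only: image_image)
  have Ym: "set (Y m) \<subseteq> set (Y n)" if "m \<le> n" for m n unfolding Yset using that by (intro UN_mono) auto
  have Yclose: "sp - inverse (real (Suc n)) < Nv k \<sigma> h (Y n)" for n
    using zsf(2)[of n] Nv_mono[OF pd s rks zsf(1) Yd Yz, of h n] by linarith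
  define F where "F n = interp k \<sigma> h (Y n)" for n
  have FH: "\<forall>n. F n \<in> Hs" unfolding F_def using interp_in[OF pd s rks] by blast
  have inv_mono: "inverse (real (Suc m)) \<le> inverse (real (Suc N))" if "N \<le> m" for m N
    using that by (simp add: le_imp_inverse_le)
  have cauchy: "\<forall>e>0. \<exists>N. \<forall>m\<ge>N. \<forall>n\<ge>N. ips (\<lambda>x. F m x - F n x) (\<lambda>x. F m x - F n x) < e"
  proof (intro allI impI)
    fix e :: real assume e: "e > 0"
    obtain N where N: "inverse (real (Suc N)) < e" using reals_Archimedean[OF e] by blast
    show "\<exists>N. \<forall>m\<ge>N. \<forall>n\<ge>N. ips (\<lambda>x. F m x - F n x) (\<lambda>x. F m x - F n x) < e"
    proof (intro exI allI impI)
      fix m n assume mn: "N \<le> m" "N \<le> n"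
      show "ips (\<lambda>x. F m x - F n x) (\<lambda>x. F m x - F n x) < e"
      proof (cases "m \<le> n")
        case True
        have "ips (\<lambda>x. F m x - F n x) (\<lambda>x. F m x - F n x) = Nv k \<sigma> h (Y n) - Nv k \<sigma> h (Y m)"
          unfolding F_def by (rule Nv_diff(2)[OF pd s rks Yd Yd Ym[OF True]])
        also have "\<dots> < inverse (real (Suc m))" using le_s[OF Yd, of n] Yclose[of m] by linarith
        also have "\<dots> \<le> inverse (real (Suc N))" using mn by (intro inv_mono)
        finally show ?thesis using N by linarith
      next
        case False
        then have nm: "n \<le> m" by simp
        have "ips (\<lambda>x. F m x - F n x) (\<lambda>x. F m x - F n x) = Nv k \<sigma> h (Y m) - Nv k \<sigma> h (Y n)"
          unfolding F_def by (rule Nv_diff(1)[OF pd s rks Yd Yd Ym[OF nm]])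
        also have "\<dots> < inverse (real (Suc n))" using le_s[OF Yd, of m] Yclose[of n] by linarith
        also have "\<dots> \<le> inverse (real (Suc N))" using mn by (intro inv_mono)
        finally show ?thesis using N by linarith
      qed
    qed
  qed
  obtain w where w: "w \<in> Hs" "\<forall>e>0. \<exists>N. \<forall>n\<ge>N. ips (\<lambda>x. F n x - w x) (\<lambda>x. F n x - w x) < e"
    using rk_complete[OF rks FH cauchy] by blast
  have "w = h"
  proof
    fix z
    show "w z = h z"
    proof (rule ccontr)
      assume ne: "w z \<noteq> h z"
      define d where "d = \<bar>w z - h z\<bar>"
      have d: "d > 0" using ne unfolding d_def by simp
      define c where "c = sqrt (noisy_kernel k \<sigma> z z)"
      have "noisy_kernel k \<sigma> z z \<ge> 0"
        using rk_pos[OF rks rk_ker[OF rks], of z] rk_repr[OF rks rk_ker[OF rks], of z z] by simp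
      then have c0: "c \<ge> 0" unfolding c_def by simp
      define c1 where "c1 = c + 1"
      have c1: "c1 > 0" "c \<le> c1" using c0 unfolding c1_def by auto
      define e0 where "e0 = (d/(2*c1))^2"
      have e0: "e0 > 0" using d c1 unfolding e0_def by simp
      obtain N1 where N1: "\<forall>n\<ge>N1. ips (\<lambda>x. F n x - w x) (\<lambda>x. F n x - w x) < e0" using w(2) e0 by blast
      obtain N2 where N2: "inverse (real (Suc N2)) < e0" using reals_Archimedean[OF e0] by blast
      define n where "n = max N1 N2"
      have D1: "(\<lambda>x. F n x - w x) \<in> Hs" using FH w(1) by (intro rk_minus[OF rks]) auto
      have "\<bar>F n z - w z\<bar> \<le> sqrt (ips (\<lambda>x. F n x - w x) (\<lambda>x. F n x - w x)) * c"
        using rk_eval_bound[OF rks D1, of z] unfolding c_def by simp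
      also have "\<dots> < d/2"
        using small_aux[OF rk_pos[OF rks D1] _ c1(1) d c0 c1(2)] N1 e0_def n_def by simp
      finally have b1: "\<bar>F n z - w z\<bar> < d/2" .
      define Y' where "Y' = (if z \<in> set (Y n) then Y n else Y n @ [z])"
      have Y'd: "distinct Y'" "set (Y n) \<subseteq> set Y'" "z \<in> set Y'" unfolding Y'_def using Yd[of n] by auto
      obtain j where j: "j < length Y'" "Y'!j = z" using Y'd(3) by (metis in_set_conv_nth)
      have hz: "interp k \<sigma> h Y' z = h z" using interp_val[OF pd s Y'd(1) j(1)] j(2) by simp
      have D2: "(\<lambda>x. interp k \<sigma> h Y' x - F n x) \<in> Hs"
        unfolding F_def by (intro rk_minus[OF rks] interp_in[OF pd s rks])
      have q: "ips (\<lambda>x. interp k \<sigma> h Y' x - F n x) (\<lambda>x. interp k \<sigma> h Y' x - F n x) < e0"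
      proof -
        have "ips (\<lambda>x. interp k \<sigma> h Y' x - F n x) (\<lambda>x. interp k \<sigma> h Y' x - F n x) = Nv k \<sigma> h Y' - Nv k \<sigma> h (Y n)"
          unfolding F_def by (rule Nv_diff(1)[OF pd s rks Yd Y'd(1) Y'd(2)])
        also have "\<dots> < inverse (real (Suc n))" using le_s[OF Y'd(1)] Yclose[of n] by linarith
        also have "\<dots> \<le> inverse (real (Suc N2))" unfolding n_def by (intro inv_mono) simp
        finally show ?thesis using N2 by linarith
      qed
      have "\<bar>h z - F n z\<bar> \<le> sqrt (ips (\<lambda>x. interp k \<sigma> h Y' x - F n x) (\<lambda>x. interp k \<sigma> h Y' x - F n x)) * c"
        using rk_eval_bound[OF rks D2, of z] hz unfolding c_def by simp
      also have "\<dots> < d/2"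
        using small_aux[OF rk_pos[OF rks D2] _ c1(1) d c0 c1(2)] q e0_def by simp
      finally have b2: "\<bar>h z - F n z\<bar> < d/2" .
      from b1 b2 have "\<bar>w z - h z\<bar> < d" by linarith
      then show False unfolding d_def by simp
    qed
  qed
  then show ?thesis using w(1) h_def by simp
qed




lemma rk_minusr: "is_rkhs K H ip \<Longrightarrow> u \<in> H \<Longrightarrow> f \<in> H \<Longrightarrow> g \<in> H \<Longrightarrow>
   ip u (\<lambda>x. f x - g x) = ip u f - ip u g"
  using rk_sym[of K H ip u "\<lambda>x. f x - g x"] rk_minus[of K H ip f g] rk_minusl[of K H ip f g u]
    rk_sym[of K H ip u f] rk_sym[of K H ip u g] by simp

lemma sum_rot3: "(\<Sum>a\<in>A. \<Sum>b\<in>B. \<Sum>c\<in>C. f a b c) = (\<Sum>b\<in>B. \<Sum>c\<in>C. \<Sum>a\<in>A. f a b c)"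
proof -
  have "(\<Sum>a\<in>A. \<Sum>b\<in>B. \<Sum>c\<in>C. f a b c) = (\<Sum>b\<in>B. \<Sum>a\<in>A. \<Sum>c\<in>C. f a b c)"
    by (rule sum.swap)
  also have "\<dots> = (\<Sum>b\<in>B. \<Sum>c\<in>C. \<Sum>a\<in>A. f a b c)"
    by (intro sum.cong refl) (rule sum.swap)
  finally show ?thesis .
qed

lemma main_unfolded:
  fixes k :: "'a \<Rightarrow> 'a \<Rightarrow> real" and \<sigma> :: real
    and Hk Hd Hs :: "('a \<Rightarrow> real) set"
    and ipk ipd ips :: "('a \<Rightarrow> real) \<Rightarrow> ('a \<Rightarrow> real) \<Rightarrow> real"
    and f g :: "'a \<Rightarrow> real" and xs xhs :: "'a list"
  assumes pd: "pd_kernel k" and s: "\<sigma> > 0"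
    and rkk: "is_rkhs k Hk ipk"
    and rkd: "is_rkhs (\<lambda>x y. \<sigma>^2 * delta_kernel x y) Hd ipd"
    and rks: "is_rkhs (noisy_kernel k \<sigma>) Hs ips"
    and f: "f \<in> Hk" and g: "g \<in> Hd"
    and dist: "distinct xs"
    and out: "\<forall>xh \<in> set xhs. xh \<notin> set xs"
    and h_def: "h = (\<lambda>x. f x + g x)" and ys_def: "ys = vec (length xs) (\<lambda>i. h (xs ! i))"
    and L_def: "L = length xhs"
  shows "\<bar>(\<Sum>i<L. post_mean k \<sigma> xs ys (xhs ! i)) - (\<Sum>i<L. f (xhs ! i))\<bar>
            \<le> rkhs_norm ips h *
                 sqrt ((\<Sum>i<L. \<Sum>j<L. post_cov k \<sigma> xs (xhs ! i) (xhs ! j)) + real L ^ 2 * \<sigma>^2)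
               + real L * rkhs_norm ipd g * \<sigma>"
proof -
  define t where "t = length xs"
  define R where "R i j = regInv k \<sigma> xs $$ (i,j)" for i j
  define ks where "ks = noisy_kernel k \<sigma>"
  define b where "b i = (\<Sum>l<L. k (xhs!l) (xs!i))" for i
  define c where "c j = (\<Sum>i<t. b i * R i j)" for j
  have hH: "h \<in> Hs" unfolding h_def by (rule h_in[OF pd s rkk rkd rks f g])
  have ksym: "k x y = k y x" for x y using pd unfolding pd_kernel_def by blast
  have Rsym: "R i j = R j i" if "i < t" "j < t" for i j
    unfolding R_def using regInv_entries(1)[OF pd s] that t_def by simp
  have RG: "(\<Sum>i<t. R m i * (k (xs!i) (xs!j) + \<sigma>^2 * (if i = j then 1 else 0))) = (if m = j then 1 else 0)"
    if "m < t" "j < t" for m j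
    unfolding R_def using regInv_entries(2)[OF pd s] that t_def by simp
  have ks_out: "ks (xhs!l) (xs!j) = k (xhs!l) (xs!j)" "ks (xs!j) (xhs!l) = k (xs!j) (xhs!l)"
    if "l < L" "j < t" for l j
    using out that unfolding ks_def noisy_kernel_def delta_kernel_def t_def L_def
    by (auto dest!: nth_mem)
  have ks_in: "ks (xs!i) (xs!j) = k (xs!i) (xs!j) + \<sigma>^2 * (if i = j then 1 else 0)"
    if "i < t" "j < t" for i j using noisy_distinct[OF dist] that unfolding ks_def t_def by simp
  have S1: "(\<Sum>l<L. post_mean k \<sigma> xs ys (xhs!l)) = (\<Sum>j<t. c j * h (xs!j))"
  proof -
    have "(\<Sum>l<L. post_mean k \<sigma> xs ys (xhs!l)) = (\<Sum>l<L. \<Sum>i<t. k (xhs!l) (xs!i) * (\<Sum>j<t. R i j * h (xs!j)))"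
      unfolding ys_def R_def t_def by (auto simp: post_mean_sum[OF pd s] intro!: sum.cong)
    also have "\<dots> = (\<Sum>i<t. b i * (\<Sum>j<t. R i j * h (xs!j)))"
      unfolding b_def sum_distrib_right by (rule sum.swap)
    also have "\<dots> = (\<Sum>j<t. c j * h (xs!j))"
      unfolding c_def sum_distrib_left sum_distrib_right by (subst sum.swap) (simp add: mult_ac)
    finally show ?thesis .
  qed
  define A where "A = (\<lambda>x. \<Sum>j<t. c j * ks (xs!j) x)"
  define B where "B = (\<lambda>x. \<Sum>l<L. ks (xhs!l) x)"
  define \<phi> where "\<phi> = (\<lambda>x. A x - B x)"
  have AH: "A \<in> Hs" unfolding A_def ks_def by (intro rk_lin[OF rks] rk_ker[OF rks]) auto
  have BH: "B \<in> Hs" unfolding B_def ks_def by (intro rk_sum[OF rks] rk_ker[OF rks]) auto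
  have \<phi>H: "\<phi> \<in> Hs" unfolding \<phi>_def by (rule rk_minus[OF rks AH BH])
  have ipA: "ips u A = (\<Sum>j<t. c j * u (xs!j))" if "u \<in> Hs" for u
    unfolding A_def ks_def by (rule rk_ip_kern_r[OF rks]) (auto simp: that)
  have ipB: "ips u B = (\<Sum>l<L. u (xhs!l))" if "u \<in> Hs" for u
    using rk_ip_kern_r[OF rks, of "{..<L}" u "\<lambda>_. 1" "\<lambda>l. xhs!l"] that by (simp add: B_def ks_def)
  have h\<phi>: "ips h \<phi> = (\<Sum>j<t. c j * h (xs!j)) - (\<Sum>l<L. h (xhs!l))"
    unfolding \<phi>_def by (simp add: rk_minusr[OF rks hH AH BH] ipA[OF hH] ipB[OF hH])
  have Axj: "A (xs!j) = b j" if j: "j < t" for j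
  proof -
    have "A (xs!j) = (\<Sum>i<t. (\<Sum>m<t. b m * R m i) * (k (xs!i) (xs!j) + \<sigma>^2 * (if i = j then 1 else 0)))"
      unfolding A_def c_def using j by (intro sum.cong refl) (simp add: ks_in)
    also have "\<dots> = (\<Sum>m<t. b m * (\<Sum>i<t. R m i * (k (xs!i) (xs!j) + \<sigma>^2 * (if i = j then 1 else 0))))"
      unfolding sum_distrib_right sum_distrib_left by (subst sum.swap) (simp add: mult_ac)
    also have "\<dots> = (\<Sum>m<t. b m * (if m = j then 1 else 0))"
      using j by (intro sum.cong refl) (simp add: RG)
    also have "\<dots> = b j" using j by (simp add: if_distrib cong: if_cong)
    finally show ?thesis .
  qed
  have Bxj: "B (xs!j) = b j" if j: "j < t" for j
    unfolding B_def b_def using j by (intro sum.cong refl) (simp add: ks_out)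
  have \<phi>xj: "\<phi> (xs!j) = 0" if "j < t" for j unfolding \<phi>_def using Axj Bxj that by simp
  have \<phi>\<phi>1: "ips \<phi> \<phi> = - (\<Sum>l<L. \<phi> (xhs!l))"
    using rk_minusr[OF rks \<phi>H AH BH] ipA[OF \<phi>H] ipB[OF \<phi>H] \<phi>xj unfolding \<phi>_def[symmetric] by simp
  have SA: "(\<Sum>l<L. A (xhs!l)) = (\<Sum>j<t. c j * b j)"
  proof -
    have "(\<Sum>l<L. A (xhs!l)) = (\<Sum>l<L. \<Sum>j<t. c j * k (xhs!l) (xs!j))"
      unfolding A_def by (intro sum.cong refl) (simp add: ks_out ksym)
    also have "\<dots> = (\<Sum>j<t. c j * b j)"
      unfolding b_def sum_distrib_left by (rule sum.swap)
    finally show ?thesis .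
  qed
  have \<phi>\<phi>: "ips \<phi> \<phi> = (\<Sum>l<L. \<Sum>l'<L. ks (xhs!l') (xhs!l)) - (\<Sum>j<t. c j * b j)"
  proof -
    have "(\<Sum>l<L. \<phi> (xhs!l)) = (\<Sum>l<L. A (xhs!l)) - (\<Sum>l<L. B (xhs!l))"
      unfolding \<phi>_def by (rule sum_subtractf)
    then show ?thesis unfolding \<phi>\<phi>1 SA B_def by simp
  qed
  have PC: "(\<Sum>l<L. \<Sum>l'<L. post_cov k \<sigma> xs (xhs!l) (xhs!l')) = (\<Sum>l<L. \<Sum>l'<L. k (xhs!l) (xhs!l')) - (\<Sum>j<t. c j * b j)"
  proof -
    have "(\<Sum>l<L. \<Sum>l'<L. \<Sum>i<t. k (xhs!l) (xs!i) * (\<Sum>j<t. R i j * k (xhs!l') (xs!j))) = (\<Sum>j<t. c j * b j)"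
    proof -
      have "(\<Sum>l<L. \<Sum>l'<L. \<Sum>i<t. k (xhs!l) (xs!i) * (\<Sum>j<t. R i j * k (xhs!l') (xs!j)))
          = (\<Sum>l<L. \<Sum>i<t. k (xhs!l) (xs!i) * (\<Sum>j<t. R i j * b j))"
      proof (rule sum.cong[OF refl])
        fix l
        have "(\<Sum>l'<L. \<Sum>i<t. k (xhs!l) (xs!i) * (\<Sum>j<t. R i j * k (xhs!l') (xs!j)))
            = (\<Sum>l'<L. \<Sum>i<t. \<Sum>j<t. k (xhs!l) (xs!i) * (R i j * k (xhs!l') (xs!j)))"
          by (simp add: sum_distrib_left)
        also have "\<dots> = (\<Sum>i<t. \<Sum>j<t. \<Sum>l'<L. k (xhs!l) (xs!i) * (R i j * k (xhs!l') (xs!j)))"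
          by (rule sum_rot3)
        also have "\<dots> = (\<Sum>i<t. k (xhs!l) (xs!i) * (\<Sum>j<t. R i j * b j))"
          unfolding b_def by (simp add: sum_distrib_left)
        finally show "(\<Sum>l'<L. \<Sum>i<t. k (xhs!l) (xs!i) * (\<Sum>j<t. R i j * k (xhs!l') (xs!j)))
            = (\<Sum>i<t. k (xhs!l) (xs!i) * (\<Sum>j<t. R i j * b j))" .
      qed
      also have "\<dots> = (\<Sum>i<t. b i * (\<Sum>j<t. R i j * b j))"
        unfolding b_def sum_distrib_right by (rule sum.swap)
      also have "\<dots> = (\<Sum>j<t. c j * b j)"
        unfolding c_def sum_distrib_left sum_distrib_right by (subst sum.swap) (simp add: mult_ac)
      finally show ?thesis .
    qed
    then show ?thesis
      unfolding post_cov_sum[OF pd s] R_def t_def sum_subtractf by simp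
  qed
  have dsum: "(\<Sum>l<L. \<Sum>l'<L. ks (xhs!l') (xhs!l)) = (\<Sum>l<L. \<Sum>l'<L. k (xhs!l) (xhs!l')) + \<sigma>^2 * (\<Sum>l<L. \<Sum>l'<L. delta_kernel (xhs!l') (xhs!l))"
    unfolding ks_def noisy_kernel_def sum.distrib sum_distrib_left by (simp add: ksym)
  have dle: "(\<Sum>l<L. \<Sum>l'<L. delta_kernel (xhs!l') (xhs!l)) \<le> (\<Sum>l<L. \<Sum>l'<L. (1::real))"
    by (intro sum_mono) (simp add: delta_kernel_def)
  have \<phi>\<phi>le: "ips \<phi> \<phi> \<le> (\<Sum>l<L. \<Sum>l'<L. post_cov k \<sigma> xs (xhs!l) (xhs!l')) + real L ^ 2 * \<sigma>^2"
  proof -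
    have "\<sigma>^2 * (\<Sum>l<L. \<Sum>l'<L. delta_kernel (xhs!l') (xhs!l)) \<le> \<sigma>^2 * (\<Sum>l<L. \<Sum>l'<L. (1::real))"
      using dle by (intro mult_left_mono) auto
    then show ?thesis unfolding \<phi>\<phi> PC dsum by (simp add: power2_eq_square mult_ac)
  qed
  have gb: "\<bar>g z\<bar> \<le> sqrt (ipd g g) * \<sigma>" for z
    using rk_eval_bound[OF rkd g, of z] s by (simp add: delta_kernel_def)
  have gsum: "\<bar>\<Sum>l<L. g (xhs!l)\<bar> \<le> real L * (sqrt (ipd g g) * \<sigma>)"
  proof -
    have "\<bar>\<Sum>l<L. g (xhs!l)\<bar> \<le> (\<Sum>l<L. \<bar>g (xhs!l)\<bar>)" by (rule sum_abs)
    also have "\<dots> \<le> (\<Sum>l<L. sqrt (ipd g g) * \<sigma>)" by (intro sum_mono gb)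
    finally show ?thesis by simp
  qed
  have hb: "\<bar>ips h \<phi>\<bar> \<le> sqrt (ips h h) * sqrt ((\<Sum>l<L. \<Sum>l'<L. post_cov k \<sigma> xs (xhs!l) (xhs!l')) + real L ^ 2 * \<sigma>^2)"
  proof -
    have "\<bar>ips h \<phi>\<bar> \<le> sqrt (ips h h) * sqrt (ips \<phi> \<phi>)" by (rule rk_cs[OF rks hH \<phi>H])
    also have "\<dots> \<le> sqrt (ips h h) * sqrt ((\<Sum>l<L. \<Sum>l'<L. post_cov k \<sigma> xs (xhs!l) (xhs!l')) + real L ^ 2 * \<sigma>^2)"
      using \<phi>\<phi>le rk_pos[OF rks hH] by (intro mult_left_mono real_sqrt_le_mono) auto
    finally show ?thesis .
  qed
  have eq: "(\<Sum>i<L. post_mean k \<sigma> xs ys (xhs ! i)) - (\<Sum>i<L. f (xhs ! i)) = ips h \<phi> + (\<Sum>l<L. g (xhs!l))"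
    unfolding S1 h\<phi> by (simp add: h_def sum.distrib)
  show ?thesis unfolding eq rkhs_norm_def mult.assoc[of "real L"]
    using hb gsum abs_triangle_ineq[of "ips h \<phi>" "\<Sum>l<L. g (xhs!l)"] by linarith
qed


theorem mainTheorem16:
  fixes k :: "'a \<Rightarrow> 'a \<Rightarrow> real" and \<sigma> :: real
    and Hk Hd Hs :: "('a \<Rightarrow> real) set"
    and ipk ipd ips :: "('a \<Rightarrow> real) \<Rightarrow> ('a \<Rightarrow> real) \<Rightarrow> real"
    and f g :: "'a \<Rightarrow> real" and xs xhs :: "'a list"
  assumes "pd_kernel k" and "\<sigma> > 0"
    and "is_rkhs k Hk ipk"
    and "is_rkhs (\<lambda>x y. \<sigma>^2 * delta_kernel x y) Hd ipd"
    and "is_rkhs (noisy_kernel k \<sigma>) Hs ips"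
    and "f \<in> Hk" and "g \<in> Hd"
    and "distinct xs"
    and "\<forall>xh \<in> set xhs. xh \<notin> set xs"
  shows "let h = (\<lambda>x. f x + g x);
             ys = vec (length xs) (\<lambda>i. h (xs ! i));
             L = length xhs
         in \<bar>(\<Sum>i<L. post_mean k \<sigma> xs ys (xhs ! i)) - (\<Sum>i<L. f (xhs ! i))\<bar>
            \<le> rkhs_norm ips h *
                 sqrt ((\<Sum>i<L. \<Sum>j<L. post_cov k \<sigma> xs (xhs ! i) (xhs ! j)) + real L ^ 2 * \<sigma>^2)
               + real L * rkhs_norm ipd g * \<sigma>"
    unfolding Let_def by (rule main_unfolded[OF assms refl refl refl])

end
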